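(* Let $q\ge 2$ be a prime power and $M,D\in\mathbb{N}$ with $D\ge 10$ and $M\le D^2$. Then \[ N_H(M,D)\le\frac{q(D-1)}{q\left(1-\sqrt{\frac{\ln D}{D}}\right)-1}. \]
   Context: $N_H(M,D)$ is the smallest length $r$ such that there exist $M$ vectors $\boldsymbol{p}_1,\ldots,\boldsymbol{p}_M\in\mathbb{F}_q^r$ with pairwise Hamming distance $d_H(\boldsymbol{p}_i,\boldsymbol{p}_j)\ge D$ for all $i\ne j$. *)

theory Defs
  imports Complex_Main "HOL-Library.Cardinality"
begin

definition hamming_dist :: "'a list \<Rightarrow> 'a list \<Rightarrow> nat" where
  "hamming_dist xs ys = card {i. i < length xs \<and> xs ! i \<noteq> ys ! i}"

definition N_H :: "'a itself \<Rightarrow> nat \<Rightarrow> nat \<Rightarrow> nat" where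
  "N_H _ M D = (LEAST r. \<exists>p :: nat \<Rightarrow> 'a list.
      (\<forall>i<M. length (p i) = r) \<and>
      (\<forall>i<M. \<forall>j<M. i \<noteq> j \<longrightarrow> D \<le> hamming_dist (p i) (p j)))"

end

theory Submission
  imports Defs "HOL-Probability.Hoeffding"
begin

lemma hd_Cons: "hamming_dist (x#xs) (y#ys) = (if x = y then 0 else 1) + hamming_dist xs ys"
proof -
  have e: "{i. i < length (x#xs) \<and> (x#xs)!i \<noteq> (y#ys)!i} =
     (if x = y then {} else {0}) \<union> Suc ` {i. i < length xs \<and> xs!i \<noteq> ys!i}"
    apply (rule set_eqI)
    subgoal for i by (cases i) (auto simp: image_iff)
    done
  have "finite {i. i < length xs \<and> xs!i \<noteq> ys!i}" by simp
  then show ?thesis unfolding hamming_dist_def e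
    by (subst card_Un_disjoint) (auto simp: card_image)
qed

lemma hd_sym: "length xs = length ys \<Longrightarrow> hamming_dist xs ys = hamming_dist ys xs"
  unfolding hamming_dist_def by (metis)

definition Fc :: "nat \<Rightarrow> nat \<Rightarrow> nat \<Rightarrow> nat" where
  "Fc c n d = (\<Sum>k<d. (n choose k) * c ^ k)"

lemma Fc_0d: "Fc c n 0 = 0" by (simp add: Fc_def)
lemma Fc_n0: "Fc c 0 d = (if d = 0 then 0 else 1)"
  by (induction d) (auto simp: Fc_def)

lemma Fc_rec: "Fc c (Suc n) (Suc d) = Fc c n (Suc d) + c * Fc c n d"
proof (induction d)
  case 0 then show ?case by (simp add: Fc_def)
next
  case (Suc d)
  have "Fc c (Suc n) (Suc (Suc d)) = Fc c (Suc n) (Suc d) + (Suc n choose Suc d) * c ^ Suc d"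
    by (simp add: Fc_def)
  also have "\<dots> = Fc c n (Suc d) + c * Fc c n d + ((n choose d) + (n choose Suc d)) * c ^ Suc d"
    using Suc by simp
  also have "\<dots> = (Fc c n (Suc d) + (n choose Suc d) * c ^ Suc d) + c * (Fc c n d + (n choose d) * c ^ d)"
    by (simp add: algebra_simps)
  also have "\<dots> = Fc c n (Suc (Suc d)) + c * Fc c n (Suc d)"
    by (simp add: Fc_def)
  finally show ?case .
qed

lemma ball_card:
  "card {ys :: 'a::finite list. length ys = length xs \<and> hamming_dist xs ys < d}
     = Fc (CARD('a) - 1) (length xs) d"
proof (induction xs arbitrary: d)
  case Nil
  have "{ys :: 'a list. length ys = 0 \<and> hamming_dist [] ys < d} = (if d = 0 then {} else {[]})"
    by (auto simp: hamming_dist_def)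
  then show ?case by (simp add: Fc_n0)
next
  case (Cons x xs)
  show ?case
  proof (cases d)
    case 0 then show ?thesis by (simp add: Fc_0d)
  next
    case (Suc e)
    define A where "A = (\<lambda>y. {ys :: 'a list. length ys = length xs \<and> hamming_dist xs ys < (if y = x then d else e)})"
    have eq: "{ys :: 'a list. length ys = length (x#xs) \<and> hamming_dist (x#xs) ys < d}
       = (\<lambda>(y,ys). y # ys) ` (SIGMA y:UNIV. A y)"
    proof (rule set_eqI)
      fix zs :: "'a list"
      show "zs \<in> {ys. length ys = length (x#xs) \<and> hamming_dist (x#xs) ys < d} \<longleftrightarrow>
            zs \<in> (\<lambda>(y,ys). y # ys) ` (SIGMA y:UNIV. A y)"
        by (cases zs) (auto simp: A_def hd_Cons Suc image_iff)
    qed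
    have inj: "inj_on (\<lambda>(y,ys). y # ys) (SIGMA y:UNIV. A y)"
      by (auto simp: inj_on_def)
    have fin: "finite (A y)" for y
    proof -
      have "A y \<subseteq> {ys. set ys \<subseteq> UNIV \<and> length ys = length xs}" by (auto simp: A_def)
      moreover have "finite {ys :: 'a list. set ys \<subseteq> UNIV \<and> length ys = length xs}"
        by (rule finite_lists_length_eq) simp
      ultimately show ?thesis by (rule finite_subset)
    qed
    have cA: "card (A y) = (if y = x then Fc (CARD('a) - 1) (length xs) d else Fc (CARD('a) - 1) (length xs) e)" for y
      using Cons by (simp add: A_def)
    have "card (SIGMA y:UNIV. A y) = (\<Sum>y\<in>UNIV. card (A y))"
      by (rule card_SigmaI) (auto simp: fin)
    also have "\<dots> = card (A x) + (\<Sum>y\<in>UNIV - {x}. card (A y))"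
      by (subst sum.remove[of UNIV x]) auto
    also have "(\<Sum>y\<in>UNIV - {x}. card (A y)) = (\<Sum>y\<in>UNIV - {x}. Fc (CARD('a) - 1) (length xs) e)"
      by (rule sum.cong) (auto simp: cA)
    also have "\<dots> = (CARD('a) - 1) * Fc (CARD('a) - 1) (length xs) e"
      by (simp add: card_Diff_singleton)
    finally have "card (SIGMA y:UNIV. A y) = Fc (CARD('a) - 1) (length xs) d + (CARD('a) - 1) * Fc (CARD('a) - 1) (length xs) e"
      by (simp add: cA)
    then show ?thesis
      unfolding eq card_image[OF inj] by (simp add: Suc Fc_rec)
  qed
qed


lemma ball_prob:
  fixes q r D :: nat and t :: real
  assumes q: "q \<ge> 2" and r: "r > 0" and D: "D \<ge> 1"
    and t: "t = real r * (1 - 1 / real q) - (real D - 1)" and t0: "t \<ge> 0"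
  shows "real (Fc (q-1) r D) \<le> real q ^ r * exp (-2 * t\<^sup>2 / real r)"
proof -
  define p where "p = 1 - 1 / real q"
  have p01: "p \<in> {0..1}" using q by (auto simp: p_def)
  interpret binomial_distribution r p by unfold_locales (rule p01)
  have h: "measure_pmf.prob (binomial_pmf r p) {x. real x \<le> real r * p - t} \<le> exp (-2 * t\<^sup>2 / real r)"
    by (rule prob_le) (use r t0 in auto)
  have s: "{x. real x \<le> real r * p - t} = {..<D}"
    using D by (auto simp: t p_def)
  have m: "measure_pmf.prob (binomial_pmf r p) {..<D} = (\<Sum>k<D. real (r choose k) * p ^ k * (1 - p) ^ (r - k))"
    by (subst measure_measure_pmf_finite) (use p01 in auto)
  have tm: "real q ^ r * (real (r choose k) * p ^ k * (1 - p) ^ (r - k)) = real (r choose k) * real (q - 1) ^ k" for k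
  proof (cases "k \<le> r")
    case True
    have qr: "real q ^ r = real q ^ k * real q ^ (r - k)" using True by (simp add: power_add[symmetric])
    have "real q * p = real (q - 1)" using q by (simp add: p_def field_simps of_nat_diff)
    moreover have "real q * (1 - p) = 1" using q by (simp add: p_def field_simps)
    ultimately show ?thesis unfolding qr
      by (simp add: power_mult_distrib[symmetric] mult_ac)
  qed simp
  have "real (Fc (q-1) r D) = (\<Sum>k<D. real (r choose k) * real (q - 1) ^ k)"
    by (simp add: Fc_def)
  also have "\<dots> = real q ^ r * measure_pmf.prob (binomial_pmf r p) {..<D}"
    unfolding m sum_distrib_left by (rule sum.cong[OF refl], subst tm) simp
  also have "\<dots> \<le> real q ^ r * exp (-2 * t\<^sup>2 / real r)"
    using h s by (intro mult_left_mono) auto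
  finally show ?thesis .
qed

lemma greedy:
  fixes r D M V :: nat
  assumes ball: "\<And>xs :: 'a::finite list. length xs = r \<Longrightarrow>
      card {ys. length ys = r \<and> hamming_dist xs ys < D} \<le> V"
    and small: "(M - 1) * V < CARD('a) ^ r"
  shows "\<exists>p :: nat \<Rightarrow> 'a list. (\<forall>i<M. length (p i) = r) \<and>
      (\<forall>i<M. \<forall>j<M. i \<noteq> j \<longrightarrow> D \<le> hamming_dist (p i) (p j))"
proof -
  have "\<exists>p :: nat \<Rightarrow> 'a list. (\<forall>i<m. length (p i) = r) \<and>
      (\<forall>i<m. \<forall>j<m. i \<noteq> j \<longrightarrow> D \<le> hamming_dist (p i) (p j))" if "m \<le> M" for m
    using that
  proof (induction m)
    case 0 then show ?case by auto
  next
    case (Suc m)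
    then obtain p :: "nat \<Rightarrow> 'a list" where pl: "\<forall>i<m. length (p i) = r"
      and pd: "\<forall>i<m. \<forall>j<m. i \<noteq> j \<longrightarrow> D \<le> hamming_dist (p i) (p j)" by auto
    define L where "L = {ys :: 'a list. set ys \<subseteq> UNIV \<and> length ys = r}"
    define Bad where "Bad = (\<Union>i<m. {ys. length ys = r \<and> hamming_dist (p i) ys < D})"
    have finL: "finite L" unfolding L_def by (rule finite_lists_length_eq) simp
    have cL: "card L = CARD('a) ^ r" using card_lists_length_eq[of "UNIV :: 'a set" r] unfolding L_def by simp
    have "card Bad \<le> (\<Sum>i<m. card {ys. length ys = r \<and> hamming_dist (p i) ys < D})"
      unfolding Bad_def by (rule card_UN_le) simp
    also have "\<dots> \<le> (\<Sum>i<m. V)" by (intro sum_mono ball) (use pl in auto)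
    also have "\<dots> = m * V" by simp
    also have "\<dots> \<le> (M - 1) * V" using Suc.prems by (intro mult_right_mono) auto
    finally have "card Bad < card L" using small cL by linarith
    moreover have "Bad \<subseteq> L" unfolding Bad_def L_def by auto
    ultimately have "\<not> L \<subseteq> Bad" using finL by (meson card_mono finite_subset leD)
    then obtain z where zL: "z \<in> L" and zB: "z \<notin> Bad" by auto
    have zl: "length z = r" using zL by (simp add: L_def)
    have far: "D \<le> hamming_dist (p i) z" if "i < m" for i
      using zB zl that by (auto simp: Bad_def not_less)
    define p' where "p' = p(m := z)"
    have "\<forall>i<Suc m. length (p' i) = r" using pl zl by (auto simp: p'_def less_Suc_eq)
    moreover have "\<forall>i<Suc m. \<forall>j<Suc m. i \<noteq> j \<longrightarrow> D \<le> hamming_dist (p' i) (p' j)"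
    proof (intro allI impI)
      fix i j assume i: "i < Suc m" and j: "j < Suc m" and ij: "i \<noteq> j"
      show "D \<le> hamming_dist (p' i) (p' j)"
      proof (cases "i = m")
        case True
        then have "j < m" using j ij by auto
        then show ?thesis using True far[of j] hd_sym[of "p j" z] pl zl ij
          by (simp add: p'_def)
      next
        case False
        then have im: "i < m" using i by auto
        show ?thesis
        proof (cases "j = m")
          case True then show ?thesis using far[OF im] False by (simp add: p'_def)
        next
          case False then show ?thesis using pd im j ij \<open>i \<noteq> m\<close> by (simp add: p'_def)
        qed
      qed
    qed
    ultimately show ?case by blast
  qed
  then show ?thesis by blast
qed


lemma ln_ge2: assumes "(x::real) \<ge> 10" shows "ln x \<ge> 2"
proof -
  have "1 + (-1/4) \<le> exp (-1/4::real)" by (rule exp_ge_add_one_self)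
  then have "exp (1/4::real) \<le> 4/3"
    by (simp add: exp_minus field_simps)
  then have "exp (1/4::real) ^ 8 \<le> (4/3) ^ 8" by (intro power_mono) auto
  moreover have "exp (1/4::real) ^ 8 = exp 2" by (subst exp_of_nat_mult[symmetric]) simp
  moreover have "(4/3::real) ^ 8 < 10" by (simp add: power_divide)
  ultimately have "exp 2 \<le> x" using assms by simp
  then show ?thesis by (metis exp_gt_zero exp_le_cancel_iff exp_ln less_le_trans)
qed

lemma ln_lt: assumes "(x::real) \<ge> 10" shows "ln x < x / 4"
proof -
  have "1 + 5/8 + (5/8)\<^sup>2/2 \<le> exp (5/8::real)" by (rule exp_lower_Taylor_quadratic) simp
  then have "(1 + 5/8 + (5/8)\<^sup>2/2) ^ 4 \<le> exp (5/8::real) ^ 4" by (intro power_mono) auto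
  moreover have "exp (5/8::real) ^ 4 = exp (5/2)" by (subst exp_of_nat_mult[symmetric]) simp
  moreover have "10 < (1 + 5/8 + (5/8)\<^sup>2/2::real) ^ 4" by (simp add: power_divide)
  ultimately have "10 < exp (5/2::real)" by simp
  then have l10: "ln 10 < (5/2::real)" by (metis exp_less_cancel_iff exp_ln zero_less_numeral)
  have "ln x = ln 10 + ln (x / 10)" using assms by (simp add: ln_div)
  also have "ln (x/10) \<le> x/10 - 1" using assms by (intro ln_le_minus_one) auto
  finally show ?thesis using l10 assms by linarith
qed

lemma analytic:
  fixes q D r :: real
  assumes q: "q \<ge> 2" and D: "D \<ge> 10"
    and r1: "q*(D-1)/(q*(1 - sqrt (ln D / D)) - 1) - 1 < r"
    and r2: "r \<le> q*(D-1)/(q*(1 - sqrt (ln D / D)) - 1)"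
  shows "q*(1 - sqrt (ln D / D)) - 1 > 0"
    and "r * (1 - 1/q) - (D - 1) \<ge> 0"
    and "(r * (1 - 1/q) - (D - 1))\<^sup>2 \<ge> r * ln D"
    and "r \<ge> D - 1"
proof -
  define L where "L = ln D"
  define s where "s = sqrt (L / D)"
  define a where "a = 1 - 1/q"
  define B where "B = q*(D-1)/(q*(1 - s) - 1)"
  have L2: "L \<ge> 2" using ln_ge2[OF D] by (simp add: L_def)
  have L4: "L < D/4" using ln_lt[OF D] by (simp add: L_def)
  have Dp: "D > 0" using D by simp
  have s2: "s\<^sup>2 = L / D" unfolding s_def using L2 Dp by simp
  have s0: "s > 0" unfolding s_def using L2 Dp by simp
  have DL: "D * s\<^sup>2 = L" using s2 Dp by simp
  have "D * (4 * s\<^sup>2) < D * 1" using DL L4 by simp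
  then have ss: "s\<^sup>2 < (1/2)\<^sup>2" using Dp by (simp add: power_divide)
  have sh: "s < 1/2" using power_less_imp_less_base[OF ss] by simp
  have a1: "a \<ge> 1/2" "a < 1" using q by (auto simp: a_def field_simps)
  have as: "a - s > 0" using a1 sh by linarith
  have den: "q*(1 - s) - 1 = q * (a - s)" using q by (simp add: a_def field_simps)
  show "q*(1 - sqrt (ln D / D)) - 1 > 0" using den as q by (simp add: s_def L_def)
  have Beq: "B = (D - 1) / (a - s)" unfolding B_def den using q by simp
  have Bas: "B * (a - s) = D - 1" using Beq as by simp
  have B1: "B \<ge> (D - 1) / (1 - s)" unfolding Beq
    by (rule divide_left_mono) (use D as a1 sh in auto)
  have "s * ((D - 1) / (1 - s) - D) = (D * s\<^sup>2 - s) / (1 - s)"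
    using sh by (simp add: field_simps power2_eq_square)
  also have "\<dots> \<ge> 2"
  proof -
    have pos: "0 < 1 - s" using sh by simp
    have n0: "2 * (1 - s) \<le> L - s" using L2 s0 by argo
    have eq: "D * s\<^sup>2 - s = L - s" by (rule arg_cong[where f="\<lambda>x. x - s"]) (rule DL)
    have n: "2 * (1 - s) \<le> D * s\<^sup>2 - s" unfolding eq by (rule n0)
    show ?thesis using pos_le_divide_eq[OF pos] n by blast
  qed
  finally have h2: "s * ((D - 1) / (1 - s) - D) \<ge> 2" .
  have "s * ((D - 1) / (1 - s) - D) \<le> s * (B - D)"
    using B1 s0 by (intro mult_left_mono) auto
  then have sBD: "s * (B - D) \<ge> 2" using h2 by linarith
  have BD: "B \<ge> D"
  proof (rule ccontr)
    assume "\<not> D \<le> B"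
    then have "s * (B - D) < 0" using s0 by (simp add: mult_pos_neg)
    then show False using sBD by simp
  qed
  have e1: "(D * s)\<^sup>2 = D * L"
  proof -
    have "(D * s)\<^sup>2 = D * (D * s\<^sup>2)" by (simp add: power2_eq_square mult_ac)
    also have "\<dots> = D * L" by (simp only: DL)
    finally show ?thesis .
  qed
  have "10 * 2 \<le> D * L" using D L2 by (intro mult_mono) auto
  then have sq1: "1\<^sup>2 \<le> (D * s)\<^sup>2" unfolding e1 by simp
  have Ds: "D * s \<ge> 1" using power2_le_imp_le[OF sq1] s0 Dp by simp
  have "D * s \<le> B * s" using BD s0 by (intro mult_right_mono) auto
  then have Bs: "B * s \<ge> 1" using Ds by linarith
  have rB1: "B - 1 < r" unfolding B_def s_def L_def by (rule r1)
  have rB2: "r \<le> B" unfolding B_def s_def L_def by (rule r2)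
  note rB = rB1 rB2
  have teq: "r * a - (D - 1) = B * s - (B - r) * a" using Bas by (simp add: algebra_simps)
  have "(B - r) * a \<le> B - r" using rB a1 by (simp add: mult_left_le)
  then have tB: "r * a - (D - 1) \<ge> B * s - 1" using teq rB by linarith
  show "r * (1 - 1/q) - (D - 1) \<ge> 0" using tB Bs by (simp add: a_def)
  have "(B * s - 1)\<^sup>2 - B * (D * s\<^sup>2) = B * s * (s * (B - D) - 2) + 1"
    by (simp add: power2_eq_square algebra_simps)
  then have e2: "(B * s - 1)\<^sup>2 - B * L = B * s * (s * (B - D) - 2) + 1"
    by (simp only: DL)
  have "B * s * (s * (B - D) - 2) \<ge> 0"
    using mult_nonneg_nonneg[of "B * s" "s * (B - D) - 2"] sBD Bs by linarith
  then have h3: "(B * s - 1)\<^sup>2 \<ge> B * L" using e2 by linarith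
  have "B * L \<ge> r * L" using rB L2 by (intro mult_right_mono) auto
  then have "(B * s - 1)\<^sup>2 \<ge> r * L" using h3 by linarith
  moreover have "(r * a - (D - 1))\<^sup>2 \<ge> (B * s - 1)\<^sup>2"
    using tB Bs by (intro power_mono) auto
  ultimately have "(r * a - (D - 1))\<^sup>2 \<ge> r * L" by linarith
  then show "(r * (1 - 1/q) - (D - 1))\<^sup>2 \<ge> r * ln D" by (simp only: a_def L_def)
  show "r \<ge> D - 1" using rB BD by linarith
qed

lemma card_field_ge2: "CARD('a::{finite,field}) \<ge> 2"
proof -
  have "card {0, 1::'a} \<le> CARD('a)" by (rule card_mono) auto
  then show ?thesis by simp
qed

theorem lemma4p8:
  fixes M D :: nat
  assumes "D \<ge> 10" and "M \<le> D ^ 2"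
  shows "real (N_H TYPE('a::{finite,field}) M D)
           \<le> real (CARD('a)) * (real D - 1)
             / (real (CARD('a)) * (1 - sqrt (ln (real D) / real D)) - 1)"
proof -
  define q where "q = CARD('a)"
  have q2: "q \<ge> 2" unfolding q_def by (rule card_field_ge2)
  define Bd where "Bd = real q * (real D - 1) / (real q * (1 - sqrt (ln (real D) / real D)) - 1)"
  have Dr: "real D \<ge> 10" using assms(1) by simp
  have qr: "real q \<ge> 2" using q2 by simp
  have "Bd \<ge> real D - 1"
    using analytic(4)[OF qr Dr, of Bd] unfolding Bd_def by simp
  then have Bd0: "Bd \<ge> 9" using Dr by linarith
  define r where "r = nat \<lfloor>Bd\<rfloor>"
  have rr: "real r = of_int \<lfloor>Bd\<rfloor>" unfolding r_def using Bd0 by simp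
  have r1: "Bd - 1 < real r" "real r \<le> Bd" unfolding rr by linarith+
  note an = analytic[OF qr Dr, of "real r", folded Bd_def, OF r1]
  define t where "t = real r * (1 - 1 / real q) - (real D - 1)"
  have t0: "t \<ge> 0" using an(2) by (simp add: t_def)
  have tl: "t\<^sup>2 \<ge> real r * ln (real D)" using an(3) by (simp add: t_def)
  have rpos: "r > 0" using an(4) Dr by simp
  have F1: "real (Fc (q-1) r D) \<le> real q ^ r * exp (-2 * t\<^sup>2 / real r)"
    by (rule ball_prob[OF q2 rpos _ t_def t0]) (use assms(1) in simp)
  have lt: "ln (real D) \<le> t\<^sup>2 / real r"
    using tl rpos by (subst pos_le_divide_eq) (simp_all add: mult.commute)
  have "-2 * t\<^sup>2 / real r = -2 * (t\<^sup>2 / real r)" by simp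
  then have "-2 * t\<^sup>2 / real r \<le> -2 * ln (real D)" using lt by linarith
  then have ex1: "exp (-2 * t\<^sup>2 / real r) \<le> exp (-2 * ln (real D))" by simp
  have "exp (2 * ln (real D)) = real D * real D"
    using Dr by (simp only: mult_2 exp_add exp_ln of_nat_0_less_iff)
  then have ex2: "exp (-2 * ln (real D)) = 1 / (real D)\<^sup>2"
    by (simp add: exp_minus power2_eq_square divide_inverse inverse_mult_distrib)
  have "real q ^ r * exp (-2 * t\<^sup>2 / real r) \<le> real q ^ r * (1 / (real D)\<^sup>2)"
    unfolding ex2[symmetric] using ex1 by (intro mult_left_mono) simp_all
  then have "real (Fc (q-1) r D) \<le> real q ^ r / (real D)\<^sup>2" using F1 by simp
  then have F2: "real (Fc (q-1) r D) * (real D)\<^sup>2 \<le> real q ^ r"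
    using Dr by (subst (asm) pos_le_divide_eq) simp_all
  have Mlt: "real (M - 1) < (real D)\<^sup>2"
  proof -
    have "M - 1 < D ^ 2" using assms by (cases M) auto
    then show ?thesis by (metis of_nat_less_iff of_nat_power)
  qed
  have small: "(M - 1) * Fc (q-1) r D < q ^ r"
  proof (cases "Fc (q-1) r D = 0")
    case True then show ?thesis using q2 by simp
  next
    case False
    then have "real (M - 1) * real (Fc (q-1) r D) < (real D)\<^sup>2 * real (Fc (q-1) r D)"
      using Mlt by (intro mult_strict_right_mono) auto
    also have "\<dots> \<le> real q ^ r" using F2 by (simp add: mult.commute)
    finally have "real ((M - 1) * Fc (q-1) r D) < real (q ^ r)" by simp
    then show ?thesis by (simp only: of_nat_less_iff)
  qed
  have ex: "\<exists>p :: nat \<Rightarrow> 'a list. (\<forall>i<M. length (p i) = r) \<and>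
      (\<forall>i<M. \<forall>j<M. i \<noteq> j \<longrightarrow> D \<le> hamming_dist (p i) (p j))"
  proof (rule greedy[where V = "Fc (q-1) r D"])
    fix xs :: "'a list" assume "length xs = r"
    then show "card {ys. length ys = r \<and> hamming_dist xs ys < D} \<le> Fc (q-1) r D"
      using ball_card[of xs D] by (simp add: q_def)
  next
    show "(M - 1) * Fc (q-1) r D < CARD('a) ^ r" using small by (simp add: q_def)
  qed
  have "N_H TYPE('a) M D \<le> r"
    unfolding N_H_def by (rule Least_le) (rule ex)
  then have "real (N_H TYPE('a) M D) \<le> real r" by simp
  also have "\<dots> \<le> Bd" by (rule r1(2))
  finally show ?thesis by (simp add: Bd_def q_def)
qed

end
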